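(* For every positive integer $d$, $$e^*_6(d^2)=36\Bigl(e^*_1(d^2)-\tfrac35\,e^*_1(d_2^2)-\tfrac45\,e^*_1(d_3^2)+\tfrac{12}{25}\,e^*_1(d_6^2)\Bigr),$$ where $d_m=d/\prod_{p\mid m}p^{\nu_p(d)}$ is the largest divisor of $d$ coprime to $m$.
   Context: $\nu_p$ is the $p$-adic valuation. $\gamma_c(d^2)$ is multiplicative in $c$ with $\gamma_1=1$ and: $\gamma_{2^r}(d^2)=2^{r/2}$ if $r\ge2$ even and $\nu_2(d^2)=r-2$; $=2^{(r-1)/2}$ if $r$ odd and $\nu_2(d^2)\ge r-1$; $=0$ otherwise; for odd $p$, $\gamma_{p^r}(d^2)=p^{r/2-1}(p-1)$ if $r\ge2$ even and $\nu_p(d^2)\ge r$; $=p^{(r-1)/2}$ if $r$ odd and $\nu_p(d^2)=r-1$; $=0$ otherwise. $e^*_k(d^2)=\sum_{c\ge1}\frac{\gcd(c,2k)^2}{c^2}\gamma_c(d^2)$. *)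

theory Defs
  imports "HOL-Analysis.Analysis" "HOL-Computational_Algebra.Primes"
begin

definition gamma_pp :: "nat \<Rightarrow> nat \<Rightarrow> nat \<Rightarrow> real" where
  "gamma_pp p r n =
    (if r = 0 then 1
     else if p = 2 then
       (if r \<ge> 2 \<and> even r \<and> multiplicity 2 n = r - 2 then 2 ^ (r div 2)
        else if odd r \<and> multiplicity 2 n \<ge> r - 1 then 2 ^ ((r - 1) div 2)
        else 0)
     else
       (if r \<ge> 2 \<and> even r \<and> multiplicity p n \<ge> r
          then real p ^ (r div 2 - 1) * (real p - 1)
        else if odd r \<and> multiplicity p n = r - 1 then real p ^ ((r - 1) div 2)
        else 0))"

definition gamma :: "nat \<Rightarrow> nat \<Rightarrow> real" where
  "gamma c n = (\<Prod>p\<in>prime_factors c. gamma_pp p (multiplicity p c) n)"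

definition e_star :: "nat \<Rightarrow> nat \<Rightarrow> real" where
  "e_star k n = (\<Sum>c. (real (gcd (Suc c) (2 * k)))^2 / (real (Suc c))^2 * gamma (Suc c) n)"

definition coprime_part :: "nat \<Rightarrow> nat \<Rightarrow> nat" where
  "coprime_part d m = d div (\<Prod>p\<in>prime_factors m. p ^ multiplicity p d)"

end

theory Submission
  imports Defs
begin

lemma gamma_pp_cong:
  "multiplicity p n = multiplicity p n' \<Longrightarrow> gamma_pp p r n = gamma_pp p r n'"
proof (cases "p = 2")
  case True
  assume h: "multiplicity p n = multiplicity p n'"
  then have "multiplicity 2 n = multiplicity 2 n'" using True by simp
  then show ?thesis unfolding True gamma_pp_def by (simp only:)
next
  case False
  assume h: "multiplicity p n = multiplicity p n'"
  show ?thesis unfolding gamma_pp_def using False h by (simp only: if_False)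
qed

lemma gamma_pp_0[simp]: "gamma_pp p 0 n = 1"
  unfolding gamma_pp_def by simp

lemma gamma_pp_nonneg: "p > 0 \<Longrightarrow> gamma_pp p r n \<ge> 0"
  unfolding gamma_pp_def by auto

lemma prime_factors_pow: "prime (p::nat) \<Longrightarrow> r > 0 \<Longrightarrow> prime_factors (p ^ r) = {p}"
  by (simp add: prime_factorization_prime_power)

lemma gamma_prime_pow: "prime (p::nat) \<Longrightarrow> gamma (p ^ r) n = gamma_pp p r n"
proof (cases "r = 0")
  case True then show ?thesis by (simp add: gamma_def)
next
  case False
  assume p: "prime p"
  then show ?thesis using False
    by (simp add: gamma_def prime_factors_pow)
qed

lemma gamma_mult:
  assumes "coprime a (b::nat)" "a > 0" "b > 0"
  shows "gamma (a * b) n = gamma a n * gamma b n"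
proof -
  have pf: "prime_factors (a*b) = prime_factors a \<union> prime_factors b"
    using assms by (simp add: prime_factors_product)
  have disj: "prime_factors a \<inter> prime_factors b = {}"
  proof (rule ccontr)
    assume "prime_factors a \<inter> prime_factors b \<noteq> {}"
    then obtain p where "p \<in> prime_factors a" "p \<in> prime_factors b" by blast
    then have "prime p" "p dvd a" "p dvd b" by (auto simp: in_prime_factors_iff)
    then show False using assms(1) by (meson coprime_common_divisor not_prime_unit)
  qed
  have ma: "multiplicity p (a*b) = multiplicity p a" if "p \<in> prime_factors a" for p
  proof -
    have "prime p" using that by auto
    have "\<not> p dvd b" using that disj
      using assms by (auto simp: in_prime_factors_iff)
    then show ?thesis using \<open>prime p\<close> assms
      by (simp add: prime_elem_multiplicity_mult_distrib not_dvd_imp_multiplicity_0)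
  qed
  have mb: "multiplicity p (a*b) = multiplicity p b" if "p \<in> prime_factors b" for p
  proof -
    have "prime p" using that by auto
    have "\<not> p dvd a" using that disj
      using assms by (auto simp: in_prime_factors_iff)
    then show ?thesis using \<open>prime p\<close> assms
      by (simp add: prime_elem_multiplicity_mult_distrib not_dvd_imp_multiplicity_0)
  qed
  show ?thesis unfolding gamma_def pf
    by (subst prod.union_disjoint) (use disj ma mb in auto)
qed

lemma gamma_cong:
  assumes "\<And>p. p \<in> prime_factors c \<Longrightarrow> multiplicity p n = multiplicity p n'"
  shows "gamma c n = gamma c n'"
  unfolding gamma_def by (rule prod.cong) (auto intro: gamma_pp_cong assms)

lemma gamma_zero:
  assumes "c > 0" "prime p" "gamma_pp p (multiplicity p c) n = 0"
  shows "gamma c n = 0"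
proof (cases "p \<in> prime_factors c")
  case True then show ?thesis unfolding gamma_def using assms
    by (intro prod_zero) auto
next
  case False
  then have "\<not> p dvd c" using assms by (auto simp: in_prime_factors_iff)
  then have "multiplicity p c = 0" by (simp add: not_dvd_imp_multiplicity_0)
  then show ?thesis using assms by simp
qed

lemma gamma_pp_sq_le:
  assumes "prime p"
  shows "(gamma_pp p r n)^2 \<le> real p ^ r"
proof -
  have p1: "real p \<ge> 1" using assms prime_ge_1_nat by auto
  have mono: "real p ^ i \<le> real p ^ j" if "i \<le> j" for i j
    using p1 that by (simp add: power_increasing)
  consider (z) "r = 0" | (e) j where "r = 2*j" "j \<ge> 1" | (o) j where "r = 2*j+1"
    by (metis dvd_div_mult_self odd_two_times_div_two_succ mult.commute not_gr0 nonzero_mult_div_cancel_left not_one_le_zero One_nat_def Suc_leI zero_neq_numeral mult_0_right)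
  then show ?thesis
  proof cases
    case z then show ?thesis by simp
  next
    case e
    have A: "(2::real) ^ (r div 2) = real p ^ j" if "p = 2" using e that by simp
    have B: "(real p ^ (r div 2 - 1) * (real p - 1))^2 \<le> real p ^ r"
    proof -
      have "(real p ^ (j - 1) * (real p - 1))^2 = real p ^ (2*(j-1)) * (real p - 1)^2"
        by (simp add: power_mult_distrib power_mult[symmetric] mult.commute)
      also have "\<dots> \<le> real p ^ (2*(j-1)) * real p ^ 2"
        using p1 by (intro mult_left_mono power_mono) auto
      also have "\<dots> = real p ^ (2*(j-1)+2)" by (simp only: power_add)
      also have "2*(j-1)+2 = r" using e by simp
      finally show ?thesis using e by simp
    qed
    show ?thesis unfolding gamma_pp_def using e A B
      by (auto simp: power_mult[symmetric] mult.commute)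
  next
    case o
    have "(real p ^ ((r - 1) div 2))^2 \<le> real p ^ r"
      using o mono[of "2*j" r] by (simp add: power_mult[symmetric] mult.commute)
    then show ?thesis unfolding gamma_pp_def using o
      by (auto simp: power_mult[symmetric] mult.commute)
  qed
qed

lemma gamma_nonneg: "gamma c n \<ge> 0"
  unfolding gamma_def
  by (intro prod_nonneg gamma_pp_nonneg) (auto simp: in_prime_factors_iff prime_gt_0_nat)

lemma gamma_le_sqrt:
  assumes "c > 0"
  shows "gamma c n \<le> sqrt (real c)"
proof (rule real_le_rsqrt)
  have "(gamma c n)^2 = (\<Prod>p\<in>prime_factors c. (gamma_pp p (multiplicity p c) n)^2)"
    unfolding gamma_def by (simp add: prod_power_distrib)
  also have "\<dots> \<le> (\<Prod>p\<in>prime_factors c. real p ^ multiplicity p c)"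
    by (intro prod_mono conjI gamma_pp_sq_le) auto
  also have "\<dots> = real (\<Prod>p\<in>prime_factors c. p ^ multiplicity p c)" by simp
  also have "\<dots> = real c" using assms by (subst prod_prime_factors) auto
  finally show "(gamma c n)^2 \<le> real c" .
qed

definition T :: "nat \<Rightarrow> nat \<Rightarrow> nat \<Rightarrow> real" where
  "T k n c = (real (gcd c (2 * k)))^2 / (real c)^2 * gamma c n"

lemma T_nonneg: "T k n c \<ge> 0"
  unfolding T_def using gamma_nonneg by simp

lemma T_bound:
  assumes "k > 0" "c > 0"
  shows "T k n c \<le> (real (2*k))^2 * real c powr (-3/2)"
proof -
  have "gcd c (2*k) \<le> 2*k" using assms by (simp add: gcd_le2_nat)
  then have g: "real (gcd c (2*k)) \<le> real (2*k)" by (simp only: of_nat_le_iff)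
  have "T k n c \<le> (real (2*k))^2 / (real c)^2 * sqrt (real c)"
    unfolding T_def using assms g gamma_le_sqrt[of c n] gamma_nonneg[of c n]
    by (intro mult_mono divide_right_mono power_mono) auto
  also have "sqrt (real c) / (real c)^2 = real c powr (-3/2)"
  proof -
    have s: "sqrt (real c) = real c powr (1/2)" by (simp add: powr_half_sqrt)
    have q: "(real c)^2 = real c powr 2" using assms by (simp add: powr_numeral)
    have "real c powr (1/2) / real c powr 2 = real c powr (1/2 - 2)" by (rule powr_diff[symmetric])
    also have "(1/2 - 2) = (-3/2::real)" by simp
    finally have "real c powr (1/2) / real c powr 2 = real c powr (-3/2)" .
    then show ?thesis by (simp only: s q)
  qed
  then have "(real (2*k))^2 / (real c)^2 * sqrt (real c) = (real (2*k))^2 * real c powr (-3/2)"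
    by (metis times_divide_eq_left times_divide_eq_right)
  finally show ?thesis .
qed

lemma T_summable:
  assumes "k > 0"
  shows "summable (\<lambda>c. T k n (Suc c))"
proof (rule summable_comparison_test')
  show "summable (\<lambda>c. (real (2*k))^2 * real (Suc c) powr (-3/2))"
    by (intro summable_mult) (subst summable_Suc_iff[where f = "\<lambda>c. real c powr (-3/2)"], simp add: summable_real_powr_iff)
  show "norm (T k n (Suc c)) \<le> (real (2*k))^2 * real (Suc c) powr (-3/2)" for c
    using T_bound[OF assms, of "Suc c" n] T_nonneg[of k n "Suc c"] by simp
qed

lemma e_star_T: "e_star k n = (\<Sum>c. T k n (Suc c))"
  unfolding e_star_def T_def ..

lemma e_star_infsum:
  assumes "k > 0"
  shows "T k n summable_on range Suc" "e_star k n = infsum (T k n) (range Suc)"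
proof -
  have "((\<lambda>c. T k n (Suc c)) has_sum e_star k n) UNIV"
    unfolding e_star_T
    by (rule sums_nonneg_imp_has_sum_strong) (use T_summable[OF assms] T_nonneg in auto)
  then have h: "(T k n has_sum e_star k n) (range Suc)"
    by (subst has_sum_reindex) (auto simp: o_def)
  then show "T k n summable_on range Suc" "e_star k n = infsum (T k n) (range Suc)"
    by (auto simp: summable_on_def infsumI)
qed

lemma gcd_mult_coprime:
  assumes "coprime a (b::nat)"
  shows "gcd (a*b) c = gcd a c * gcd b c"
proof (rule dvd_antisym)
  have "gcd (a*b) c dvd a * b" by simp
  then obtain x y where xy: "gcd (a*b) c = x * y" "x dvd a" "y dvd b" by (rule dvd_productE)
  have "x dvd c" "y dvd c" using xy by (metis dvd_mult_right dvd_mult_left gcd_dvd2)+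
  then have "x dvd gcd a c" "y dvd gcd b c" using xy by auto
  then show "gcd (a*b) c dvd gcd a c * gcd b c" using xy by (simp add: mult_dvd_mono)
next
  have cp: "coprime (gcd a c) (gcd b c)"
    using assms by (rule coprime_divisors[rotated 2]) auto
  have "gcd a c * gcd b c dvd c" using cp by (simp add: divides_mult)
  moreover have "gcd a c * gcd b c dvd a * b" by (simp add: mult_dvd_mono)
  ultimately show "gcd a c * gcd b c dvd gcd (a*b) c" by simp
qed

lemma gcd_2pow_4: "gcd (2^r) (4::nat) = 2 ^ min r 2"
proof -
  consider "r = 0" | "r = 1" | t where "r = Suc (Suc t)"
    by (metis One_nat_def not0_implies_Suc)
  then show ?thesis
  proof cases
    case 3
    have "gcd (4 * 2^t) (4::nat) = 4" by simp
    then show ?thesis using 3 by (simp add: mult.commute)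
  qed auto
qed

lemma gcd_3pow_3: "gcd (3^s) (3::nat) = 3 ^ min s 1"
  by (cases s) auto

lemma gcd_2pow_2: "gcd (2^s) (2::nat) = 2 ^ min s 1"
  by (cases s) auto

lemma cop_2pow_3: "coprime ((2::nat)^r) (3^s)"
  by (intro coprime_power_left_iff[THEN iffD2] coprime_power_right_iff[THEN iffD2]) auto

lemma gcd_2pow_12: "gcd (2^r) (12::nat) = 2 ^ min r 2"
proof -
  have "gcd (2^r) (4*3::nat) = gcd (2^r) 4"
    by (rule gcd_mult_right_right_cancel) (use cop_2pow_3[of r 1] in simp)
  then show ?thesis using gcd_2pow_4 by simp
qed

lemma gcd_3pow_12: "gcd (3^s) (12::nat) = 3 ^ min s 1"
proof -
  have "gcd (3^s) (3*4::nat) = gcd (3^s) 3"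
    by (rule gcd_mult_right_right_cancel) (use cop_2pow_3[of 2 s] in \<open>simp add: coprime_commute\<close>)
  then show ?thesis using gcd_3pow_3 by simp
qed

lemma gcd_3pow_2: "gcd (3^s) (2::nat) = 1"
  using cop_2pow_3[of 1 s] by (simp add: coprime_commute)

definition MM :: "nat set" where "MM = {m. m > 0 \<and> coprime m 6}"

lemma MM_cop2: "m \<in> MM \<Longrightarrow> coprime m 2"
  unfolding MM_def by (metis coprime_mult_right_iff mem_Collect_eq numeral_times_numeral semiring_norm(12) semiring_norm(13) num_double)

lemma MM_cop3: "m \<in> MM \<Longrightarrow> coprime m 3"
proof -
  assume "m \<in> MM"
  then have "coprime m (2*3)" unfolding MM_def by simp
  then show ?thesis by (simp only: coprime_mult_right_iff)
qed

lemma MM_cop12: "m \<in> MM \<Longrightarrow> coprime m 12"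
proof -
  assume "m \<in> MM"
  then have "coprime m (2*2*3)" using MM_cop2 MM_cop3 by (simp only: coprime_mult_right_iff)
  then show ?thesis by simp
qed

lemma MM_not2: "m \<in> MM \<Longrightarrow> \<not> 2 dvd m"
  using MM_cop2 by (metis coprime_common_divisor dvd_refl not_prime_unit prime_nat_iff_prime two_is_prime_nat)

lemma MM_not3: "m \<in> MM \<Longrightarrow> \<not> 3 dvd m"
proof
  assume m: "m \<in> MM" and d: "3 dvd m"
  have "is_unit (3::nat)" using coprime_common_divisor[OF MM_cop3[OF m] d] by simp
  then show False by simp
qed

lemma mult_pow_prime: "prime (p::nat) \<Longrightarrow> prime q \<Longrightarrow> multiplicity p (q ^ r) = (if p = q then r else 0)"
  by (simp add: prime_elem_multiplicity_power_distrib prime_multiplicity_other)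

lemma mult_decomp:
  assumes "prime p" "m > 0"
  shows "multiplicity p ((2::nat)^r*3^s*m) = (if p = 2 then r else 0) + (if p = 3 then s else 0) + multiplicity p m"
proof -
  have "multiplicity p ((2::nat)^r*3^s*m) = multiplicity p ((2::nat)^r) + multiplicity p ((3::nat)^s) + multiplicity p m"
    using assms by (simp add: prime_elem_multiplicity_mult_distrib)
  then show ?thesis using assms by (simp add: mult_pow_prime)
qed

lemma decomp_mult2: "m \<in> MM \<Longrightarrow> multiplicity 2 ((2::nat)^r*3^s*m) = r"
  using mult_decomp[of 2 m r s] MM_not2[of m] by (simp add: MM_def not_dvd_imp_multiplicity_0)

lemma decomp_mult3: "m \<in> MM \<Longrightarrow> multiplicity 3 ((2::nat)^r*3^s*m) = s"
  using mult_decomp[of 3 m r s] MM_not3[of m] by (simp add: MM_def not_dvd_imp_multiplicity_0)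

lemma decomp_ex:
  assumes "(c::nat) > 0"
  obtains r s m where "m \<in> MM" "c = 2^r*3^s*m"
proof -
  obtain y where y: "c = 2 ^ multiplicity 2 c * y" "\<not> 2 dvd y"
    by (rule multiplicity_decompose'[of c 2]) (use assms in auto)
  have "y \<noteq> 0" using y(2) by (metis dvd_0_right)
  obtain m where m: "y = 3 ^ multiplicity 3 y * m" "\<not> 3 dvd m"
    by (rule multiplicity_decompose'[of y 3]) (use \<open>y \<noteq> 0\<close> in auto)
  have "m > 0" using assms y m by (metis gr0I mult_0_right)
  have "\<not> 2 dvd m"
  proof
    assume "2 dvd m"
    then have "2 dvd y" using m(1) by (metis dvd_mult)
    then show False using y(2) by simp
  qed
  then have "coprime m 2" by (simp add: prime_imp_coprime coprime_commute)
  have "coprime 3 m" by (rule prime_imp_coprime) (use m(2) in auto)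
  then have "coprime m 3" by (simp add: coprime_commute)
  have "coprime m (2*3)" using \<open>coprime m 2\<close> \<open>coprime m 3\<close> coprime_mult_right_iff by blast
  then have "m \<in> MM" using \<open>m > 0\<close> by (simp add: MM_def)
  then show ?thesis using that y m by (metis mult.assoc)
qed

lemma g_inj: "inj_on (\<lambda>((r,s),m). (2::nat)^r*3^s*m) (A \<times> MM)"
proof (rule inj_onI)
  fix x y :: "(nat \<times> nat) \<times> nat"
  assume x: "x \<in> A \<times> MM" and y: "y \<in> A \<times> MM"
    and e0: "(\<lambda>((r,s),m). (2::nat)^r*3^s*m) x = (\<lambda>((r,s),m). (2::nat)^r*3^s*m) y"
  obtain r s m where xr: "x = ((r,s),m)" by (metis prod.exhaust)
  obtain r' s' m' where yr: "y = ((r',s'),m')" by (metis prod.exhaust)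
  have m: "m \<in> MM" "m' \<in> MM" using x y xr yr by auto
  have e: "(2::nat)^r*3^s*m = 2^r'*3^s'*m'" using e0 xr yr by simp
  have "r = r'" using decomp_mult2[OF m(1), of r s] decomp_mult2[OF m(2), of r' s'] e by simp
  moreover have "s = s'" using decomp_mult3[OF m(1), of r s] decomp_mult3[OF m(2), of r' s'] e by simp
  ultimately show "x = y" using e xr yr by simp
qed

lemma gamma_decomp:
  assumes "m \<in> MM"
  shows "gamma ((2::nat)^r*3^s*m) n = gamma_pp 2 r n * gamma_pp 3 s n * gamma m n"
proof -
  have m0: "m > 0" using assms by (simp add: MM_def)
  have "coprime (2^r*3^s) m" using MM_cop2[OF assms] MM_cop3[OF assms]
    by (simp add: coprime_commute)
  then have "gamma ((2::nat)^r*3^s*m) n = gamma ((2::nat)^r*3^s) n * gamma m n"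
    using m0 by (simp add: gamma_mult)
  also have "gamma ((2::nat)^r*3^s) n = gamma (2^r) n * gamma (3^s) n"
    using cop_2pow_3 by (simp add: gamma_mult)
  finally show ?thesis by (simp add: gamma_prime_pow)
qed

definition X :: "nat \<Rightarrow> nat \<Rightarrow> nat \<Rightarrow> real" where
  "X k r n = (real (gcd (2^r) (2*k)))^2 / 4^r * gamma_pp 2 r n"
definition Y :: "nat \<Rightarrow> nat \<Rightarrow> nat \<Rightarrow> real" where
  "Y k s n = (real (gcd (3^s) (2*k)))^2 / 9^s * gamma_pp 3 s n"
definition G :: "nat \<Rightarrow> nat \<Rightarrow> real" where
  "G n m = gamma m n / (real m)^2"

lemma gcd_decomp:
  assumes "m \<in> MM" "k = 1 \<or> k = 6"
  shows "gcd ((2::nat)^r*3^s*m) (2*k) = gcd (2^r) (2*k) * gcd (3^s) (2*k)"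
proof -
  have "2*k = 2 \<or> 2*k = 12" using assms(2) by auto
  then have "coprime (2*k) m" using MM_cop2[OF assms(1)] MM_cop12[OF assms(1)] coprime_commute by metis
  then have "gcd ((2::nat)^r*3^s*m) (2*k) = gcd ((2::nat)^r*3^s) (2*k)"
    by (rule gcd_mult_left_right_cancel)
  also have "\<dots> = gcd (2^r) (2*k) * gcd (3^s) (2*k)"
    using cop_2pow_3 by (rule gcd_mult_coprime)
  finally show ?thesis .
qed

lemma T_decomp:
  assumes "m \<in> MM" "k = 1 \<or> k = 6"
  shows "T k n ((2::nat)^r*3^s*m) = X k r n * Y k s n * G n m"
proof -
  have "real ((2::nat)^r*3^s*m) ^ 2 = 4^r * 9^s * (real m)^2"
  proof -
    have a: "((2::real)^r)^2 = 4^r"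
    proof -
      have "((2::real)^r)^2 = 2^(r*2)" by (rule power_mult[symmetric])
      also have "\<dots> = (2^2)^r" by (simp only: mult.commute[of r] power_mult)
      finally show ?thesis by simp
    qed
    have b: "((3::real)^s)^2 = 9^s"
    proof -
      have "((3::real)^s)^2 = 3^(s*2)" by (rule power_mult[symmetric])
      also have "\<dots> = (3^2)^s" by (simp only: mult.commute[of s] power_mult)
      finally show ?thesis by simp
    qed
    have "real ((2::nat)^r*3^s*m) = 2^r*3^s*real m" by simp
    then have "real ((2::nat)^r*3^s*m) ^ 2 = ((2::real)^r)^2 * ((3::real)^s)^2 * (real m)^2"
      by (simp only: power_mult_distrib)
    then show ?thesis by (simp only: a b)
  qed
  then show ?thesis
    unfolding T_def X_def Y_def G_def gcd_decomp[OF assms] gamma_decomp[OF assms(1)]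
    by (simp add: field_simps power_mult_distrib)
qed

lemma gp2_vanish: "multiplicity 2 n \<le> 2*a \<Longrightarrow> r > 2*a+2 \<Longrightarrow> gamma_pp 2 r n = 0"
  unfolding gamma_pp_def by auto

lemma gp3_vanish: "multiplicity 3 n \<le> 2*b \<Longrightarrow> s > 2*b+1 \<Longrightarrow> gamma_pp 3 s n = 0"
  unfolding gamma_pp_def by auto

lemma pos_range_Suc: "(c::nat) > 0 \<Longrightarrow> c \<in> range Suc"
  by (metis Suc_pred rangeI)

lemma e_star_decomp:
  assumes k: "k = 1 \<or> k = 6" and a: "multiplicity 2 n \<le> 2*a" and b: "multiplicity 3 n \<le> 2*b"
  shows "e_star k n = (\<Sum>r\<le>2*a+2. X k r n) * (\<Sum>s\<le>2*b+1. Y k s n) * infsum (G n) MM"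
proof -
  define D where "D = {..2*a+2} \<times> {..2*b+1}"
  define g :: "(nat \<times> nat) \<times> nat \<Rightarrow> nat" where "g = (\<lambda>((r,s),m). (2::nat)^r*3^s*m)"
  have k0: "k > 0" using k by auto
  have finD: "finite D" unfolding D_def by simp
  have summ: "T k n summable_on range Suc" and es: "e_star k n = infsum (T k n) (range Suc)"
    using e_star_infsum[OF k0, of n] by auto
  have U_sub: "g ` (D \<times> MM) \<subseteq> range Suc"
  proof
    fix c assume "c \<in> g ` (D \<times> MM)"
    then obtain r s m where "m \<in> MM" "c = 2^r*3^s*m" unfolding g_def by auto
    then have "c > 0" by (simp add: MM_def)
    then show "c \<in> range Suc" by (rule pos_range_Suc)
  qed
  have zero: "T k n c = 0" if c: "c \<in> range Suc - g ` (D \<times> MM)" for c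
  proof -
    have "c > 0" using c by auto
    then obtain r s m where m: "m \<in> MM" and cr: "c = 2^r*3^s*m" by (rule decomp_ex)
    have "(r,s) \<notin> D"
    proof
      assume "(r,s) \<in> D"
      then have "c \<in> g ` (D \<times> MM)" using m cr unfolding g_def
        by (intro image_eqI[of _ _ "((r,s),m)"]) auto
      then show False using c by auto
    qed
    then have "r > 2*a+2 \<or> s > 2*b+1" unfolding D_def by auto
    then have "X k r n = 0 \<or> Y k s n = 0"
      unfolding X_def Y_def using gp2_vanish[OF a] gp3_vanish[OF b] by auto
    then show ?thesis unfolding cr T_decomp[OF m k] by auto
  qed
  have "infsum (T k n) (range Suc) = infsum (T k n) (g ` (D \<times> MM))"
    by (rule infsum_cong_neutral) (use zero U_sub in auto)
  also have "\<dots> = infsum (T k n \<circ> g) (D \<times> MM)"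
    unfolding g_def by (rule infsum_reindex[OF g_inj])
  also have "\<dots> = infsum (\<lambda>x. infsum (\<lambda>m. (T k n \<circ> g) (x,m)) MM) D"
  proof (rule infsum_Sigma_banach[symmetric])
    have "T k n summable_on g ` (D \<times> MM)"
      by (rule summable_on_subset_banach[OF summ U_sub])
    then show "(T k n \<circ> g) summable_on (D \<times> MM)"
      unfolding g_def by (subst summable_on_reindex[OF g_inj, symmetric])
  qed
  also have "\<dots> = (\<Sum>x\<in>D. infsum (\<lambda>m. (T k n \<circ> g) (x,m)) MM)"
    using finD by simp
  also have "\<dots> = (\<Sum>x\<in>D. X k (fst x) n * Y k (snd x) n * infsum (G n) MM)"
  proof (rule sum.cong[OF refl])
    fix x :: "nat \<times> nat"
    obtain r s where x: "x = (r,s)" by (metis prod.exhaust)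
    have "infsum (\<lambda>m. (T k n \<circ> g) (x,m)) MM = infsum (\<lambda>m. X k r n * Y k s n * G n m) MM"
      by (rule infsum_cong) (simp add: x g_def T_decomp[OF _ k])
    also have "\<dots> = X k r n * Y k s n * infsum (G n) MM"
      by (rule infsum_cmult_right')
    finally show "infsum (\<lambda>m. (T k n \<circ> g) (x,m)) MM = X k (fst x) n * Y k (snd x) n * infsum (G n) MM"
      using x by simp
  qed
  also have "\<dots> = (\<Sum>r\<le>2*a+2. \<Sum>s\<le>2*b+1. X k r n * Y k s n * infsum (G n) MM)"
    unfolding D_def by (subst sum.cartesian_product) (simp add: case_prod_beta)
  also have "\<dots> = (\<Sum>r\<le>2*a+2. X k r n) * (\<Sum>s\<le>2*b+1. Y k s n) * infsum (G n) MM"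
    by (simp only: sum_distrib_left sum_distrib_right) (rule sum.swap)
  finally show ?thesis using es by simp
qed

lemma X_cong: "multiplicity 2 n = multiplicity 2 n' \<Longrightarrow> X k r n = X k r n'"
  unfolding X_def using gamma_pp_cong by metis

lemma Y_cong: "multiplicity 3 n = multiplicity 3 n' \<Longrightarrow> Y k s n = Y k s n'"
  unfolding Y_def using gamma_pp_cong by metis

lemma G_indep:
  assumes "m \<in> MM" "w > 0"
  shows "G ((2::nat)^\<alpha>*3^\<beta>*w) m = G w m"
proof -
  have "gamma m ((2::nat)^\<alpha>*3^\<beta>*w) = gamma m w"
  proof (rule gamma_cong)
    fix p assume p: "p \<in> prime_factors m"
    then have pr: "prime p" and pd: "p dvd m" by (auto simp: in_prime_factors_iff)
    have "p \<noteq> 2" using pd MM_not2[OF assms(1)] by auto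
    moreover have "p \<noteq> 3" using pd MM_not3[OF assms(1)] by auto
    ultimately show "multiplicity p ((2::nat)^\<alpha>*3^\<beta>*w) = multiplicity p w"
      using mult_decomp[OF pr assms(2)] by simp
  qed
  then show ?thesis unfolding G_def by simp
qed

lemma gp2_1: "gamma_pp 2 (Suc 0) n = 1"
  unfolding gamma_pp_def by simp

lemma gp3_1: "multiplicity 3 n = 0 \<Longrightarrow> gamma_pp 3 (Suc 0) n = 1"
  unfolding gamma_pp_def by simp

lemma gp2_2: "multiplicity 2 n = 0 \<Longrightarrow> gamma_pp 2 2 n = 2"
  unfolding gamma_pp_def by simp

lemma SX6: "(\<Sum>r\<le>2*a+2. X 6 r n) = 4 * (\<Sum>r\<le>2*a+2. X 1 r n) - 6"
proof -
  have e: "2*a+2 = Suc (Suc (2*a))" by simp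
  have x0: "X k 0 n = 1" for k unfolding X_def by simp
  have x61: "X 6 (Suc 0) n = 1" unfolding X_def using gcd_2pow_12[of 1] by (simp add: gp2_1)
  have x11: "X 1 (Suc 0) n = 1" unfolding X_def by (simp add: gp2_1)
  have xs: "X 6 (Suc (Suc i)) n = 4 * X 1 (Suc (Suc i)) n" for i
  proof -
    have "gcd (2 ^ Suc (Suc i)) (2*6::nat) = 4" using gcd_2pow_12[of "Suc (Suc i)"] by simp
    moreover have "gcd (2 ^ Suc (Suc i)) (2*1::nat) = 2" using gcd_2pow_2[of "Suc (Suc i)"] by simp
    ultimately show ?thesis unfolding X_def by simp
  qed
  show ?thesis unfolding e sum.atMost_Suc_shift x0 x61 x11 xs
    by (simp add: sum_distrib_left)
qed

lemma SX1_0: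
  assumes "multiplicity 2 n = 0"
  shows "(\<Sum>r\<le>2*a+2. X 1 r n) = 5/2"
proof -
  have e: "2*a+2 = Suc (Suc (2*a))" by simp
  have x0: "X 1 0 n = 1" unfolding X_def by simp
  have x11: "X 1 (Suc 0) n = 1" unfolding X_def by (simp add: gp2_1)
  have xs: "X 1 (Suc (Suc i)) n = (if i = 0 then 1/2 else 0)" for i
  proof (cases "i = 0")
    case True then show ?thesis unfolding X_def using gp2_2[OF assms] by (simp add: numeral_2_eq_2[symmetric])
  next
    case False
    then have "gamma_pp 2 (Suc (Suc i)) n = 0" using gp2_vanish[of n 0 "Suc (Suc i)"] assms by simp
    then show ?thesis using False unfolding X_def by simp
  qed
  show ?thesis unfolding e sum.atMost_Suc_shift x0 x11 xs by simp
qed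

lemma SY6: "(\<Sum>s\<le>2*b+1. Y 6 s n) = 9 * (\<Sum>s\<le>2*b+1. Y 1 s n) - 8"
proof -
  have e: "2*b+1 = Suc (2*b)" by simp
  have y0: "Y k 0 n = 1" for k unfolding Y_def by simp
  have ys: "Y 6 (Suc i) n = 9 * Y 1 (Suc i) n" for i
  proof -
    have "gcd (3 ^ Suc i) (2*6::nat) = 3" using gcd_3pow_12[of "Suc i"] by simp
    moreover have "gcd (3 ^ Suc i) (2*1::nat) = 1" using gcd_3pow_2[of "Suc i"] by simp
    ultimately show ?thesis unfolding Y_def by simp
  qed
  show ?thesis unfolding e sum.atMost_Suc_shift y0 ys
    by (simp add: sum_distrib_left)
qed

lemma SY1_0:
  assumes "multiplicity 3 n = 0"
  shows "(\<Sum>s\<le>2*b+1. Y 1 s n) = 10/9"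
proof -
  have e: "2*b+1 = Suc (2*b)" by simp
  have y0: "Y 1 0 n = 1" unfolding Y_def by simp
  have ys: "Y 1 (Suc i) n = (if i = 0 then 1/9 else 0)" for i
  proof (cases "i = 0")
    case True then show ?thesis unfolding Y_def using gp3_1[OF assms] gcd_3pow_2[of 1] by simp
  next
    case False
    then have "gamma_pp 3 (Suc i) n = 0" using gp3_vanish[of n 0 "Suc i"] assms by simp
    then show ?thesis using False unfolding Y_def by simp
  qed
  show ?thesis unfolding e sum.atMost_Suc_shift y0 ys by simp
qed

lemma sq_decomp: "((2::nat)^a*3^b*u)^2 = 2^(2*a)*3^(2*b)*u^2"
  by (simp add: power_mult_distrib power_mult mult.commute)

theorem corollary5p4:
  fixes d :: nat
  assumes "d > 0"
  shows "e_star 6 (d^2) = 36 * (e_star 1 (d^2) - 3/5 * e_star 1 ((coprime_part d 2)^2)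
           - 4/5 * e_star 1 ((coprime_part d 3)^2) + 12/25 * e_star 1 ((coprime_part d 6)^2))"
proof -
  obtain a b u where u: "u \<in> MM" and d: "d = 2^a*3^b*u" using decomp_ex[OF assms] by metis
  have u0: "u > 0" using u by (simp add: MM_def)
  have u2: "u^2 \<in> MM" using u by (simp add: MM_def)
  have m2d: "multiplicity 2 d = a" using decomp_mult2[OF u] d by simp
  have m3d: "multiplicity 3 d = b" using decomp_mult3[OF u] d by simp
  have pf2: "prime_factors (2::nat) = {2}" by (simp add: prime_prime_factors)
  have pf3: "prime_factors (3::nat) = {3}" by (simp add: prime_prime_factors)
  have pf6: "prime_factors (6::nat) = {2,3}"
  proof -
    have "prime_factors (2*3::nat) = prime_factors 2 \<union> prime_factors 3"
      by (rule prime_factors_product) auto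
    then show ?thesis using pf2 pf3 by auto
  qed
  have cp2: "coprime_part d 2 = 3^b*u"
  proof -
    have "coprime_part d 2 = d div 2^a" by (simp add: coprime_part_def pf2 m2d)
    also have "d div 2^a = 3^b*u" unfolding d by (simp add: mult.assoc)
    finally show ?thesis .
  qed
  have cp3: "coprime_part d 3 = 2^a*u"
  proof -
    have "coprime_part d 3 = d div 3^b" by (simp add: coprime_part_def pf3 m3d)
    also have "d div 3^b = 2^a*u" unfolding d by (simp add: mult.commute mult.left_commute)
    finally show ?thesis .
  qed
  have cp6: "coprime_part d 6 = u"
  proof -
    have "coprime_part d 6 = d div (2^a*3^b)" by (simp add: coprime_part_def pf6 m2d m3d)
    also have "d div (2^a*3^b) = u" unfolding d by simp
    finally show ?thesis .
  qed
  define N where "N = (\<lambda>\<alpha> \<beta>. (2::nat)^(2*\<alpha>)*3^(2*\<beta>)*u^2)"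
  have n: "d^2 = N a b" unfolding N_def d sq_decomp ..
  have n2: "(coprime_part d 2)^2 = N 0 b" unfolding N_def cp2 using sq_decomp[of 0 b u] by simp
  have n3: "(coprime_part d 3)^2 = N a 0" unfolding N_def cp3 using sq_decomp[of a 0 u] by simp
  have n6: "(coprime_part d 6)^2 = N 0 0" unfolding N_def cp6 by simp
  have mN2: "multiplicity 2 (N \<alpha> \<beta>) = 2*\<alpha>" for \<alpha> \<beta> unfolding N_def by (rule decomp_mult2[OF u2])
  have mN3: "multiplicity 3 (N \<alpha> \<beta>) = 2*\<beta>" for \<alpha> \<beta> unfolding N_def by (rule decomp_mult3[OF u2])
  define P where "P = infsum (G (u^2)) MM"
  have GP: "infsum (G (N \<alpha> \<beta>)) MM = P" for \<alpha> \<beta>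
    unfolding P_def N_def
    by (rule infsum_cong) (use G_indep u0 in simp)
  have dec: "e_star k (N \<alpha> \<beta>) = (\<Sum>r\<le>2*a+2. X k r (N \<alpha> \<beta>)) * (\<Sum>s\<le>2*b+1. Y k s (N \<alpha> \<beta>)) * P"
    if "k = 1 \<or> k = 6" "\<alpha> \<le> a" "\<beta> \<le> b" for k \<alpha> \<beta>
    using e_star_decomp[OF that(1), of "N \<alpha> \<beta>" a b] that mN2 mN3 GP by simp
  define x where "x = (\<Sum>r\<le>2*a+2. X 1 r (N a b))"
  define y where "y = (\<Sum>s\<le>2*b+1. Y 1 s (N a b))"
  have xc: "(\<Sum>r\<le>2*a+2. X 1 r (N a \<beta>)) = x" for \<beta>
    unfolding x_def by (rule sum.cong[OF refl], rule X_cong) (simp add: mN2)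
  have yc: "(\<Sum>s\<le>2*b+1. Y 1 s (N \<alpha> b)) = y" for \<alpha>
    unfolding y_def by (rule sum.cong[OF refl], rule Y_cong) (simp add: mN3)
  have x0: "(\<Sum>r\<le>2*a+2. X 1 r (N 0 \<beta>)) = 5/2" for \<beta> by (rule SX1_0) (simp add: mN2)
  have y0: "(\<Sum>s\<le>2*b+1. Y 1 s (N \<alpha> 0)) = 10/9" for \<alpha> by (rule SY1_0) (simp add: mN3)
  have e6: "e_star 6 (N a b) = (4*x - 6) * (9*y - 8) * P"
  proof -
    have "e_star 6 (N a b) = (\<Sum>r\<le>2*a+2. X 6 r (N a b)) * (\<Sum>s\<le>2*b+1. Y 6 s (N a b)) * P"
      by (rule dec) auto
    then show ?thesis by (simp only: SX6 SY6 x_def y_def)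
  qed
  have e1: "e_star 1 (N a b) = x * y * P" using dec[of 1 a b] unfolding x_def y_def by simp
  have e12: "e_star 1 (N 0 b) = 5/2 * y * P" using dec[of 1 0 b] x0 yc by simp
  have e13: "e_star 1 (N a 0) = x * (10/9) * P" using dec[of 1 a 0] xc y0 by simp
  have e16: "e_star 1 (N 0 0) = 5/2 * (10/9) * P"
  proof -
    have "e_star 1 (N 0 0) = (\<Sum>r\<le>2*a+2. X 1 r (N 0 0)) * (\<Sum>s\<le>2*b+1. Y 1 s (N 0 0)) * P"
      by (rule dec) auto
    then show ?thesis by (simp only: x0 y0)
  qed
  show ?thesis unfolding n n2 n3 n6 e6 e1 e12 e13 e16 by (simp add: algebra_simps)
qed

end
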